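(* Let $A\in\mathbb{R}^{m_A\times n}$, $B\in\mathbb{R}^{m_B\times n}$, $b\in\mathbb{R}^{m_A}$, $d\in\mathbb{R}^{m_B}$, with $\operatorname{rk}\begin{pmatrix}A\\ B\end{pmatrix}=n$. Let $P=\{x\in\mathbb{R}^n: Ax=b,\ Bx\le d\}$, $M=\begin{pmatrix}A&0\\ B&I_{m_B}\end{pmatrix}$, $q=\begin{pmatrix}b\\ d\end{pmatrix}$, $\bar W=\ker(M)\subseteq\mathbb{R}^{n+m_B}$, $\bar P=\{(x,s)\in\mathbb{R}^n\times\mathbb{R}^{m_B}: M(x,s)=q,\ s\ge\mathbb{0}\}$, $W=\{s: (x,s)\in\bar W \text{ for some } x\}$, and $Q=\{s:(x,s)\in\bar P\text{ for some }x\}$. Then: (1) there is an invertible affine bijection $\psi: Q\to P$ defined by $M(\psi(s),s)=q$; (2) $g\in\mathbb{R}^n$ is an elementary vector in the sense that $g\in\ker(A)$ and $Bg$ is support-minimal in $\{By: y\in\ker(A),\ y\ne\mathbb{0}\}$ if and only if there exists $h\in\mathbb{R}^{m_B}$ with $(g,h)\in\bar W$, $h\ne\mathbb{0}$, and $h$ support-minimal among nonzero vectors of $W$; (3) for such a pair $(g,h)\in\bar W$ and any $s\in Q$, letting $s'=\operatorname{aug}_Q(s,h)$, we have $\psi(s')=\operatorname{aug}_P(\psi(s),g)$.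
   Context: For a polyhedron $R$, a point $x\in R$ and a direction $g$, $\operatorname{aug}_R(x,g)=x+\alpha g$ with $\alpha=\max\{\bar\alpha: x+\bar\alpha g\in R\}$ (the maximal step along $g$). Support-minimal in a set means no nonzero element of the set has strictly smaller support. *)

theory Defs
  imports "HOL-Analysis.Analysis"
begin

definition vjoin :: "real^'a \<Rightarrow> real^'b \<Rightarrow> real^('a + 'b)" where
  "vjoin x s = (\<chi> i. case i of Inl j \<Rightarrow> x $ j | Inr j \<Rightarrow> s $ j)"

definition vstack :: "real^'n^'m1 \<Rightarrow> real^'n^'m2 \<Rightarrow> real^'n^('m1 + 'm2)" where
  "vstack A B = (\<chi> i. case i of Inl r \<Rightarrow> A $ r | Inr r \<Rightarrow> B $ r)"

definition blockM :: "real^'n^'ma \<Rightarrow> real^'n^'mb \<Rightarrow> real^('n + 'mb)^('ma + 'mb)" where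
  "blockM A B = (\<chi> i j. case i of
       Inl r \<Rightarrow> (case j of Inl c \<Rightarrow> A $ r $ c | Inr c \<Rightarrow> 0)
     | Inr r \<Rightarrow> (case j of Inl c \<Rightarrow> B $ r $ c | Inr c \<Rightarrow> (if r = c then 1 else 0)))"

definition supp :: "real^'n \<Rightarrow> 'n set" where
  "supp v = {i. v $ i \<noteq> 0}"

definition support_minimal :: "(real^'n) set \<Rightarrow> real^'n \<Rightarrow> bool" where
  "support_minimal S v \<longleftrightarrow> v \<in> S \<and> \<not> (\<exists>w\<in>S. w \<noteq> 0 \<and> supp w \<subset> supp v)"

definition aug_defined :: "('a::real_vector) set \<Rightarrow> 'a \<Rightarrow> 'a \<Rightarrow> bool" where
  "aug_defined R x g \<longleftrightarrow> (\<exists>\<alpha>. x + \<alpha> *\<^sub>R g \<in> R \<and> (\<forall>\<beta>. x + \<beta> *\<^sub>R g \<in> R \<longrightarrow> \<beta> \<le> \<alpha>))"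

definition aug :: "('a::real_vector) set \<Rightarrow> 'a \<Rightarrow> 'a \<Rightarrow> 'a" where
  "aug R x g = x + (GREATEST \<alpha>. x + \<alpha> *\<^sub>R g \<in> R) *\<^sub>R g"

end

theory Submission
  imports Defs
begin

lemma vjoin_eq: "vjoin x s = vjoin x' s' \<longleftrightarrow> x = x' \<and> s = s'"
proof
  assume h: "vjoin x s = vjoin x' s'"
  have "\<And>j. x $ j = x' $ j" using arg_cong[OF h, of "\<lambda>v. v $ Inl j" for j] by (simp add: vjoin_def)
  moreover have "\<And>j. s $ j = s' $ j" using arg_cong[OF h, of "\<lambda>v. v $ Inr j" for j] by (simp add: vjoin_def)
  ultimately show "x = x' \<and> s = s'" by (simp add: vec_eq_iff)
qed simp
lemma vjoin_add: "vjoin x s + vjoin x' s' = vjoin (x+x') (s+s')"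
  unfolding vjoin_def vec_eq_iff by (simp split: sum.split)
lemma vjoin_scale: "c *\<^sub>R vjoin x s = vjoin (c *\<^sub>R x) (c *\<^sub>R s)"
  unfolding vjoin_def vec_eq_iff by (simp split: sum.split)
lemma vjoin_minus: "vjoin x s - vjoin x' s' = vjoin (x-x') (s-s')"
  unfolding vjoin_def vec_eq_iff by (simp split: sum.split)
lemma vjoin_zero: "vjoin x s = 0 \<longleftrightarrow> x = 0 \<and> s = 0"
  by (metis (no_types) vjoin_eq vjoin_scale scale_zero_left)
lemma sumPlus: "(\<Sum>j\<in>(UNIV::('a::finite+'b::finite) set). f j) = (\<Sum>j\<in>UNIV. f (Inl j)) + (\<Sum>j\<in>UNIV. f (Inr j))"
proof -
  have "(\<Sum>j\<in>(UNIV::('a::finite+'b::finite) set). f j) = sum f (UNIV <+> UNIV)" by simp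
  also have "... = sum (f \<circ> Inl) UNIV + sum (f \<circ> Inr) UNIV" by (rule sum.Plus) simp_all
  finally show ?thesis by (simp add: comp_def)
qed
lemma delta_sum: fixes b :: "'a::finite" shows "(\<Sum>j\<in>UNIV. (if b = j then 1 else 0) * (f j::real)) = f b"
proof -
  have "(\<Sum>j\<in>UNIV. (if b = j then 1 else 0) * (f j::real)) = (\<Sum>j\<in>UNIV. if b = j then f j else 0)"
    by (rule sum.cong) auto
  also have "... = f b" by simp
  finally show ?thesis .
qed
lemma M_vjoin: "blockM A B *v vjoin x s = vjoin (A *v x) (B *v x + s)"
  unfolding vec_eq_iff
proof
  fix i show "(blockM A B *v vjoin x s) $ i = vjoin (A *v x) (B *v x + s) $ i"
  proof (cases i)
    case (Inl r)
    have "(blockM A B *v vjoin x s) $ i = (\<Sum>j\<in>UNIV. blockM A B $ i $ j * vjoin x s $ j)"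
      by (simp only: matrix_vector_mult_def vec_lambda_beta)
    also have "... = (\<Sum>j\<in>UNIV. A $ r $ j * x $ j)"
      unfolding sumPlus by (simp add: Inl blockM_def vjoin_def)
    finally show ?thesis by (simp add: Inl vjoin_def matrix_vector_mult_def)
  next
    case (Inr r)
    have "(blockM A B *v vjoin x s) $ i = (\<Sum>j\<in>UNIV. blockM A B $ i $ j * vjoin x s $ j)"
      by (simp only: matrix_vector_mult_def vec_lambda_beta)
    also have "... = (\<Sum>j\<in>UNIV. B $ r $ j * x $ j) + (\<Sum>j\<in>UNIV. (if r = j then 1 else 0) * s $ j)"
      unfolding sumPlus by (simp add: Inr blockM_def vjoin_def)
    also have "... = (\<Sum>j\<in>UNIV. B $ r $ j * x $ j) + s $ r" by (simp only: delta_sum)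
    finally show ?thesis by (simp add: Inr vjoin_def matrix_vector_mult_def)
  qed
qed
lemma vstack_mult: "vstack A B *v x = vjoin (A *v x) (B *v x)"
  unfolding vec_eq_iff
proof
  fix i show "(vstack A B *v x) $ i = vjoin (A *v x) (B *v x) $ i"
    by (cases i) (simp_all add: matrix_vector_mult_def vstack_def vjoin_def)
qed

theorem lemma7p1:
  fixes A :: "real^'n^'ma" and B :: "real^'n^'mb" and b :: "real^'ma" and d :: "real^'mb"
    and P :: "(real^'n) set" and M :: "real^('n + 'mb)^('ma + 'mb)" and q :: "real^('ma + 'mb)"
    and Wbar :: "(real^('n + 'mb)) set" and Pbar :: "(real^('n + 'mb)) set"
    and W Q :: "(real^'mb) set"
  assumes rk: "rank (vstack A B) = CARD('n)"
    and P_def: "P = {x. A *v x = b \<and> (\<forall>i. (B *v x) $ i \<le> d $ i)}"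
    and M_def: "M = blockM A B"
    and q_def: "q = vjoin b d"
    and Wbar_def: "Wbar = {v. M *v v = 0}"
    and Pbar_def: "Pbar = {v. \<exists>x s. v = vjoin x s \<and> M *v v = q \<and> (\<forall>i. s $ i \<ge> 0)}"
    and W_def: "W = {s. \<exists>x. vjoin x s \<in> Wbar}"
    and Q_def: "Q = {s. \<exists>x. vjoin x s \<in> Pbar}"
  shows
    "(\<exists>\<psi>. bij_betw \<psi> Q P \<and> (\<forall>s\<in>Q. M *v vjoin (\<psi> s) s = q)
          \<and> (\<exists>L c. linear L \<and> (\<forall>s\<in>Q. \<psi> s = L s + c))
          \<and> (\<exists>L' c'. linear L' \<and> (\<forall>x\<in>P. inv_into Q \<psi> x = L' x + c')))
   \<and> (\<forall>g. (A *v g = 0 \<and> support_minimal {B *v y | y. A *v y = 0 \<and> y \<noteq> 0} (B *v g))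
          \<longleftrightarrow> (\<exists>h. vjoin g h \<in> Wbar \<and> h \<noteq> 0 \<and> support_minimal (W - {0}) h))
   \<and> (\<forall>\<psi>. (\<forall>s\<in>Q. M *v vjoin (\<psi> s) s = q) \<longrightarrow>
        (\<forall>g h s. vjoin g h \<in> Wbar \<and> h \<noteq> 0 \<and> support_minimal (W - {0}) h \<and> s \<in> Q
            \<and> aug_defined Q s h \<longrightarrow> \<psi> (aug Q s h) = aug P (\<psi> s) g))"
proof -
  have inj: "inj ((*v) (vstack A B))" using rk full_rank_injective by blast
  have uniq: "x = y" if "A *v x = A *v y" "B *v x = B *v y" for x y
    using inj that by (auto simp: inj_def vstack_mult)
  have Mq: "M *v vjoin x s = q \<longleftrightarrow> A *v x = b \<and> B *v x + s = d" for x s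
    by (simp add: M_def q_def M_vjoin vjoin_eq)
  have MW: "vjoin x s \<in> Wbar \<longleftrightarrow> A *v x = 0 \<and> B *v x + s = 0" for x s
    by (simp add: Wbar_def M_def M_vjoin vjoin_zero)
  have Qc: "s \<in> Q \<longleftrightarrow> (\<exists>x. A *v x = b \<and> B *v x + s = d) \<and> (\<forall>i. s $ i \<ge> 0)" for s
    unfolding Q_def Pbar_def by (auto simp: vjoin_eq Mq)
  have Wc: "s \<in> W \<longleftrightarrow> (\<exists>x. A *v x = 0 \<and> B *v x + s = 0)" for s
    unfolding W_def by (simp add: MW)
  have comp: "(u::real^'k) + v = w \<longleftrightarrow> (\<forall>i. u $ i = w $ i - v $ i)" for u v w
    by (auto simp: vec_eq_iff algebra_simps)
  have part1: "\<exists>\<psi>. bij_betw \<psi> Q P \<and> (\<forall>s\<in>Q. M *v vjoin (\<psi> s) s = q)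
          \<and> (\<exists>L c. linear L \<and> (\<forall>s\<in>Q. \<psi> s = L s + c))
          \<and> (\<exists>L' c'. linear L' \<and> (\<forall>x\<in>P. inv_into Q \<psi> x = L' x + c'))"
  proof -
    obtain C where C: "C ** vstack A B = mat 1"
      using inj matrix_left_invertible_injective by blast
    define \<psi> where "\<psi> s = C *v vjoin b (d - s)" for s
    have psi_eq: "\<psi> s = x" if "A *v x = b" "B *v x + s = d" for x s
    proof -
      have "B *v x = d - s" using that(2) by (metis add_diff_cancel_right')
      hence "vstack A B *v x = vjoin b (d - s)" using that(1) by (simp add: vstack_mult)
      hence "C *v (vstack A B *v x) = \<psi> s" by (simp add: \<psi>_def)
      thus ?thesis by (simp add: matrix_vector_mul_assoc C)
    qed
    have spec: "A *v \<psi> s = b \<and> B *v \<psi> s + s = d" if "s \<in> Q" for s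
    proof -
      from that obtain x where "A *v x = b" "B *v x + s = d" unfolding Qc by blast
      moreover from this have "\<psi> s = x" by (intro psi_eq)
      ultimately show ?thesis by simp
    qed
    have inP: "\<psi> s \<in> P" if "s \<in> Q" for s
    proof -
      have "\<forall>i. s $ i \<ge> 0" using that Qc by blast
      moreover have "\<forall>i. (B *v \<psi> s) $ i = d $ i - s $ i" using spec[OF that] comp by blast
      ultimately show ?thesis using spec[OF that] by (simp add: P_def)
    qed
    have preQ: "d - B *v x \<in> Q \<and> \<psi> (d - B *v x) = x" if "x \<in> P" for x
    proof -
      have "A *v x = b" "\<forall>i. (B *v x) $ i \<le> d $ i" using that P_def by auto
      moreover have "B *v x + (d - B *v x) = d" by simp
      ultimately show ?thesis using psi_eq[of x "d - B *v x"] unfolding Qc by (auto simp: algebra_simps)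
    qed
    have injQ: "inj_on \<psi> Q"
    proof
      fix s s' assume "s \<in> Q" "s' \<in> Q" "\<psi> s = \<psi> s'"
      thus "s = s'" using spec[of s] spec[of s'] by (metis add_diff_cancel_left')
    qed
    have bij: "bij_betw \<psi> Q P"
    proof -
      have "\<psi> ` Q \<subseteq> P" using inP by blast
      moreover have "P \<subseteq> \<psi> ` Q"
      proof
        fix x assume "x \<in> P"
        then show "x \<in> \<psi> ` Q" using preQ[of x] by (metis rev_image_eqI)
      qed
      ultimately show ?thesis unfolding bij_betw_def using injQ by blast
    qed
    have lin1: "linear (\<lambda>s. C *v vjoin (0::real^'ma) (- s))"
    proof (rule linearI)
      fix x y :: "real^'mb" and c :: real
      show "C *v vjoin (0::real^'ma) (- (x + y)) = C *v vjoin 0 (- x) + C *v vjoin 0 (- y)"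
        by (simp add: vjoin_add flip: matrix_vector_right_distrib)
      show "C *v vjoin (0::real^'ma) (- (c *\<^sub>R x)) = c *\<^sub>R (C *v vjoin 0 (- x))"
        by (simp add: vjoin_scale flip: matrix_vector_mult_scaleR)
    qed
    have aff1: "\<psi> s = C *v vjoin 0 (- s) + C *v vjoin b d" for s
      by (simp add: \<psi>_def flip: matrix_vector_right_distrib) (simp add: vjoin_add)
    have lin2: "linear (\<lambda>x. - (B *v x))"
      by (rule linearI) (simp_all add: matrix_vector_right_distrib matrix_vector_mult_scaleR)
    have aff2: "inv_into Q \<psi> x = - (B *v x) + d" if "x \<in> P" for x
      using preQ[OF that] inv_into_f_eq[OF injQ] by simp
    show ?thesis
    proof (intro exI conjI)
      show "bij_betw \<psi> Q P" by (rule bij)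
      show "\<forall>s\<in>Q. M *v vjoin (\<psi> s) s = q" using spec Mq by blast
      show "linear (\<lambda>s. C *v vjoin 0 (- s))" by (rule lin1)
      show "\<forall>s\<in>Q. \<psi> s = C *v vjoin 0 (- s) + C *v vjoin b d" using aff1 by blast
      show "linear (\<lambda>x. - (B *v x))" by (rule lin2)
      show "\<forall>x\<in>P. inv_into Q \<psi> x = - (B *v x) + d" using aff2 by blast
    qed
  qed
  have part2: "\<forall>g. (A *v g = 0 \<and> support_minimal {B *v y | y. A *v y = 0 \<and> y \<noteq> 0} (B *v g))
          \<longleftrightarrow> (\<exists>h. vjoin g h \<in> Wbar \<and> h \<noteq> 0 \<and> support_minimal (W - {0}) h)"
  proof
    fix g
    let ?S = "{B *v y | y. A *v y = 0 \<and> y \<noteq> 0}"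
    have kerB: "y = 0" if "A *v y = 0" "B *v y = 0" for y
      using uniq[of y 0] that by simp
    have Wm: "w \<in> W - {0} \<longleftrightarrow> - w \<in> ?S" for w
    proof
      assume "w \<in> W - {0}"
      hence "w \<in> W" "w \<noteq> 0" by auto
      then obtain x where x: "A *v x = 0" "B *v x + w = 0" "w \<noteq> 0" unfolding Wc by blast
      hence "B *v x = - w" by (simp add: eq_neg_iff_add_eq_0)
      moreover have "x \<noteq> 0" using x calculation by auto
      ultimately show "- w \<in> ?S" using x by (metis (mono_tags, lifting) mem_Collect_eq)
    next
      assume "- w \<in> ?S"
      then obtain y where y: "A *v y = 0" "y \<noteq> 0" "B *v y = - w" by auto
      have "w \<noteq> 0" using kerB y by auto
      moreover have "B *v y + w = 0" using y by simp
      moreover have "w \<in> W" unfolding Wc using y \<open>B *v y + w = 0\<close> by blast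
      ultimately show "w \<in> W - {0}" by blast
    qed
    have suppm: "supp (- v) = supp v" for v :: "real^'mb" by (simp add: supp_def)
    show "(A *v g = 0 \<and> support_minimal ?S (B *v g))
          \<longleftrightarrow> (\<exists>h. vjoin g h \<in> Wbar \<and> h \<noteq> 0 \<and> support_minimal (W - {0}) h)"
    proof
      assume a: "A *v g = 0 \<and> support_minimal ?S (B *v g)"
      hence Ag: "A *v g = 0" and inS: "B *v g \<in> ?S"
        and mn: "\<not> (\<exists>w\<in>?S. w \<noteq> 0 \<and> supp w \<subset> supp (B *v g))"
        by (auto simp: support_minimal_def)
      have hW: "- (B *v g) \<in> W - {0}" using Wm[of "- (B *v g)"] inS by simp
      show "\<exists>h. vjoin g h \<in> Wbar \<and> h \<noteq> 0 \<and> support_minimal (W - {0}) h"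
      proof (intro exI conjI)
        show "vjoin g (- (B *v g)) \<in> Wbar" using Ag MW by simp
        show "- (B *v g) \<noteq> 0" using hW by blast
        show "support_minimal (W - {0}) (- (B *v g))"
          unfolding support_minimal_def
        proof (intro conjI notI)
          show "- (B *v g) \<in> W - {0}" by (rule hW)
          assume "\<exists>w\<in>W - {0}. w \<noteq> 0 \<and> supp w \<subset> supp (- (B *v g))"
          then obtain w where "w \<in> W - {0}" "w \<noteq> 0" "supp w \<subset> supp (- (B *v g))" by blast
          hence "- w \<in> ?S" "- w \<noteq> 0" "supp (- w) \<subset> supp (B *v g)"
            using Wm[of w] suppm by auto
          thus False using mn by blast
        qed
      qed
    next
      assume "\<exists>h. vjoin g h \<in> Wbar \<and> h \<noteq> 0 \<and> support_minimal (W - {0}) h"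
      then obtain h where h: "vjoin g h \<in> Wbar" "h \<noteq> 0" "support_minimal (W - {0}) h" by blast
      hence Ag: "A *v g = 0" and Bg: "B *v g + h = 0" using MW by auto
      hence hB: "h = - (B *v g)" by (simp add: eq_neg_iff_add_eq_0 add.commute)
      have hW: "h \<in> W - {0}" and mn: "\<not> (\<exists>w\<in>W - {0}. w \<noteq> 0 \<and> supp w \<subset> supp h)"
        using h(3) by (auto simp: support_minimal_def)
      have inS: "B *v g \<in> ?S" using Wm[of h] hW hB by simp
      show "A *v g = 0 \<and> support_minimal ?S (B *v g)"
        unfolding support_minimal_def
      proof (intro conjI notI)
        show "A *v g = 0" by (rule Ag)
        show "B *v g \<in> ?S" by (rule inS)
        assume "\<exists>w\<in>?S. w \<noteq> 0 \<and> supp w \<subset> supp (B *v g)"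
        then obtain w where "w \<in> ?S" "w \<noteq> 0" "supp w \<subset> supp (B *v g)" by blast
        hence "- w \<in> W - {0}" "- w \<noteq> 0" "supp (- w) \<subset> supp h"
          using Wm[of "- w"] suppm hB by auto
        thus False using mn by blast
      qed
    qed
  qed
  have part3: "\<forall>\<psi>. (\<forall>s\<in>Q. M *v vjoin (\<psi> s) s = q) \<longrightarrow>
        (\<forall>g h s. vjoin g h \<in> Wbar \<and> h \<noteq> 0 \<and> support_minimal (W - {0}) h \<and> s \<in> Q
            \<and> aug_defined Q s h \<longrightarrow> \<psi> (aug Q s h) = aug P (\<psi> s) g)"
  proof (intro allI impI)
    fix \<psi> g h s
    assume sp: "\<forall>s\<in>Q. M *v vjoin (\<psi> s) s = q"
    assume a: "vjoin g h \<in> Wbar \<and> h \<noteq> 0 \<and> support_minimal (W - {0}) h \<and> s \<in> Q \<and> aug_defined Q s h"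
    hence Ag: "A *v g = 0" and Bg: "B *v g + h = 0" and sQ: "s \<in> Q" and ad: "aug_defined Q s h"
      using MW by auto
    have x0: "A *v \<psi> s = b" "B *v \<psi> s + s = d" using sp sQ Mq by auto
    have lin: "A *v (\<psi> s + \<beta> *\<^sub>R g) = b \<and> B *v (\<psi> s + \<beta> *\<^sub>R g) + (s + \<beta> *\<^sub>R h) = d" for \<beta>
    proof
      show "A *v (\<psi> s + \<beta> *\<^sub>R g) = b" using x0 Ag
        by (simp add: matrix_vector_right_distrib matrix_vector_mult_scaleR)
      have "B *v (\<psi> s + \<beta> *\<^sub>R g) + (s + \<beta> *\<^sub>R h) = (B *v \<psi> s + s) + \<beta> *\<^sub>R (B *v g + h)"
        by (simp add: matrix_vector_right_distrib matrix_vector_mult_scaleR algebra_simps)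
      also have "... = d" using x0 Bg by simp
      finally show "B *v (\<psi> s + \<beta> *\<^sub>R g) + (s + \<beta> *\<^sub>R h) = d" .
    qed
    have equiv: "(s + \<beta> *\<^sub>R h \<in> Q) = (\<psi> s + \<beta> *\<^sub>R g \<in> P)" for \<beta>
    proof -
      have "(s + \<beta> *\<^sub>R h \<in> Q) = (\<forall>i. (s + \<beta> *\<^sub>R h) $ i \<ge> 0)"
        unfolding Qc using lin by blast
      moreover have "(\<psi> s + \<beta> *\<^sub>R g \<in> P) = (\<forall>i. (B *v (\<psi> s + \<beta> *\<^sub>R g)) $ i \<le> d $ i)"
        using lin P_def by simp
      moreover have "(B *v (\<psi> s + \<beta> *\<^sub>R g)) $ i = d $ i - (s + \<beta> *\<^sub>R h) $ i" for i
        using lin[of \<beta>] comp by blast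
      ultimately show ?thesis by (simp add: add.commute neg_le_iff_le le_diff_eq diff_le_eq)
    qed
    obtain \<alpha> where al: "s + \<alpha> *\<^sub>R h \<in> Q" "\<forall>\<beta>. s + \<beta> *\<^sub>R h \<in> Q \<longrightarrow> \<beta> \<le> \<alpha>"
      using ad unfolding aug_defined_def by blast
    have G1: "(GREATEST \<beta>. s + \<beta> *\<^sub>R h \<in> Q) = \<alpha>"
      using al by (intro Greatest_equality) auto
    have G2: "(GREATEST \<beta>. \<psi> s + \<beta> *\<^sub>R g \<in> P) = \<alpha>"
      using al equiv by (intro Greatest_equality) auto
    have augQ: "aug Q s h = s + \<alpha> *\<^sub>R h" by (simp add: aug_def G1)
    have augP: "aug P (\<psi> s) g = \<psi> s + \<alpha> *\<^sub>R g" by (simp add: aug_def G2)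
    have y: "A *v \<psi> (s + \<alpha> *\<^sub>R h) = b" "B *v \<psi> (s + \<alpha> *\<^sub>R h) + (s + \<alpha> *\<^sub>R h) = d"
      using sp al(1) Mq by auto
    have "\<psi> (s + \<alpha> *\<^sub>R h) = \<psi> s + \<alpha> *\<^sub>R g"
      apply (rule uniq)
      using y lin[of \<alpha>] apply simp
      using y(2) lin[of \<alpha>] by (metis add_right_cancel)
    thus "\<psi> (aug Q s h) = aug P (\<psi> s) g" using augQ augP by simp
  qed
  show ?thesis using part1 part2 part3 by blast
qed

end
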